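(* Let $x_i,y_i\in\mathbb{Z}$ ($1\le i\le N$) with $x_i<x_{i+1}$ and $y_i<y_{i+1}$ for all $i$. For $\sigma\in\mathbb{S}_N$ define the Laurent monomial $$h_\sigma(\xi_1,\dots,\xi_N)=\prod_{(b,a)}\frac{\xi_b}{\xi_a}\prod_{i=1}^N\xi_{\sigma(i)}^{\,x_i-y_{\sigma(i)}-1},$$ the first product over all inversions $(b,a)$ of $\sigma$, and for $\gamma\in\{1,\dots,N\}$ let $h^\gamma_\sigma$ be the function of $\eta$ and $\xi_\delta$ ($\delta\neq\gamma$) obtained by substituting $\xi_\gamma=\eta/\prod_{\delta\ne\gamma}\xi_\delta$ into $h_\sigma$. (i) If $\sigma,\sigma'\in\mathbb{S}_N$ differ only by an interchange of two adjacent entries $\alpha$ and $\beta$, and $\gamma\ne\alpha,\beta$, then $h^\gamma_\sigma|_{\xi_\alpha=\xi_\beta}=h^\gamma_{\sigma'}|_{\xi_\alpha=\xi_\beta}$. (ii) If moreover $\gamma$ appears to the right of $\alpha$ and $\beta$ (in $\sigma$, equivalently in $\sigma'$) and $\gamma<\alpha,\beta$, then the exponents of $\xi_\alpha$ and of $\xi_\beta$ in $h^\gamma_\sigma$ and in $h^\gamma_{\sigma'}$ are at most $0$.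
   Context: Permutations are in one-line notation $\sigma(1)\cdots\sigma(N)$; an inversion $(b,a)$ of $\sigma$ is a pair of entries with $b>a$ and $b$ appearing to the left of $a$ in $\sigma$. *)

theory Defs
  imports "HOL-Combinatorics.Permutations" "HOL-Library.Function_Algebras"
begin

text \<open>Laurent monomials in variables of type 'v are represented by their exponent
  maps 'v => int (product of monomials = sum of exponent maps).\<close>

definition mscale :: "int \<Rightarrow> ('v \<Rightarrow> int) \<Rightarrow> ('v \<Rightarrow> int)" where
  "mscale c e = (\<lambda>v. c * e v)"

definition mvar :: "'v \<Rightarrow> ('v \<Rightarrow> int)" where
  "mvar c = (\<lambda>v. if v = c then 1 else 0)"

definition inversions :: "nat \<Rightarrow> (nat \<Rightarrow> nat) \<Rightarrow> (nat \<times> nat) set" where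
  "inversions N \<sigma> = {(\<sigma> i, \<sigma> j) | i j. 1 \<le> i \<and> i < j \<and> j \<le> N \<and> \<sigma> i > \<sigma> j}"

definition hmon :: "nat \<Rightarrow> (nat \<Rightarrow> int) \<Rightarrow> (nat \<Rightarrow> int) \<Rightarrow> (nat \<Rightarrow> nat) \<Rightarrow> (nat \<Rightarrow> int)" where
  "hmon N x y \<sigma> =
     (\<Sum>(b,a)\<in>inversions N \<sigma>. mvar b - mvar a)
     + (\<Sum>i=1..N. mscale (x i - y (\<sigma> i) - 1) (mvar (\<sigma> i)))"

text \<open>Substitution xi_gamma := eta / prod_{delta ~= gamma} xi_delta. The result is a monomial
  in the variables eta (= None) and xi_delta (= Some delta).\<close>
definition hsubst :: "nat \<Rightarrow> nat \<Rightarrow> (nat \<Rightarrow> int) \<Rightarrow> (nat option \<Rightarrow> int)" where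
  "hsubst N \<gamma> m =
     (\<lambda>v. case v of None \<Rightarrow> 0 | Some d \<Rightarrow> if d = \<gamma> then 0 else m d)
     + mscale (m \<gamma>) (mvar None - (\<Sum>d\<in>{1..N} - {\<gamma>}. mvar (Some d)))"

text \<open>Restriction of a monomial to xi_a = xi_b (substituting xi_b := xi_a).\<close>
definition identify :: "'v \<Rightarrow> 'v \<Rightarrow> ('v \<Rightarrow> int) \<Rightarrow> ('v \<Rightarrow> int)" where
  "identify a b e = (\<lambda>v. if v = b then 0 else e v) + mscale (e b) (mvar a)"

end

theory Submission
  imports Defs
begin

lemma sum_fun_apply: "(\<Sum>i\<in>A. f i) v = (\<Sum>i\<in>A. f i v)"
  by (induction A rule: infinite_finite_induct) auto

definition LL :: "nat \<Rightarrow> (nat \<Rightarrow> nat) \<Rightarrow> nat \<Rightarrow> int" where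
  "LL N \<sigma> p = (\<Sum>l\<in>{1..N}. if p < l \<and> \<sigma> l < \<sigma> p then 1 else 0)"
definition RR :: "nat \<Rightarrow> (nat \<Rightarrow> nat) \<Rightarrow> nat \<Rightarrow> int" where
  "RR N \<sigma> p = (\<Sum>l\<in>{1..N}. if l < p \<and> \<sigma> p < \<sigma> l then 1 else 0)"

lemma inv_sum:
  assumes perm: "\<sigma> permutes {1..N}" and p: "p \<in> {1..N}"
  shows "(\<Sum>(b,a)\<in>inversions N \<sigma>. (g::nat\<Rightarrow>nat\<Rightarrow>int) b a)
     = (\<Sum>i\<in>{1..N}. \<Sum>j\<in>{1..N}. if i < j \<and> \<sigma> j < \<sigma> i then g (\<sigma> i) (\<sigma> j) else 0)"
proof -
  define P where "P = {(i,j). 1 \<le> i \<and> i < j \<and> j \<le> N \<and> \<sigma> i > \<sigma> j}"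
  have inj: "inj_on \<sigma> {1..N}" using perm permutes_inj_on by blast
  have inv: "inversions N \<sigma> = (\<lambda>(i,j). (\<sigma> i, \<sigma> j)) ` P"
    unfolding inversions_def P_def by (fastforce simp: image_iff)
  have injP: "inj_on (\<lambda>(i,j). (\<sigma> i, \<sigma> j)) P"
  proof (rule inj_onI, clarify)
    fix a b c d assume h: "(a,b)\<in>P" "(c,d)\<in>P" "\<sigma> a = \<sigma> c" "\<sigma> b = \<sigma> d"
    from h(1,2) have m: "a \<in> {1..N}" "b \<in> {1..N}" "c \<in> {1..N}" "d \<in> {1..N}"
      unfolding P_def by auto
    show "a = c \<and> b = d" using inj_onD[OF inj h(3) m(1,3)] inj_onD[OF inj h(4) m(2,4)] by simp
  qed
  have PS: "P \<subseteq> {1..N} \<times> {1..N}" unfolding P_def by auto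
  have "(\<Sum>(b,a)\<in>inversions N \<sigma>. g b a) = (\<Sum>(i,j)\<in>P. g (\<sigma> i) (\<sigma> j))"
    unfolding inv using sum.reindex[OF injP, of "\<lambda>(b,a). g b a"] by (simp add: case_prod_unfold)
  also have "\<dots> = (\<Sum>q\<in>({1..N} \<times> {1..N}) \<inter> P. (\<lambda>(i,j). g (\<sigma> i) (\<sigma> j)) q)"
    using PS by (simp add: inf.absorb2)
  also have "\<dots> = (\<Sum>(i,j)\<in>{1..N} \<times> {1..N}. if (i,j) \<in> P then g (\<sigma> i) (\<sigma> j) else 0)"
    by (subst sum.inter_restrict) (auto intro!: sum.cong split: prod.splits)
  also have "\<dots> = (\<Sum>i\<in>{1..N}. \<Sum>j\<in>{1..N}. if i < j \<and> \<sigma> j < \<sigma> i then g (\<sigma> i) (\<sigma> j) else 0)"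
    unfolding sum.cartesian_product[symmetric] by (intro sum.cong refl) (auto simp: P_def)
  finally show ?thesis .
qed

lemma hmon_apply:
  "hmon N x y \<sigma> v = (\<Sum>(b,a)\<in>inversions N \<sigma>. (if v = b then 1 else 0) - (if v = a then 1 else 0))
     + (\<Sum>i=1..N. (x i - y (\<sigma> i) - 1) * (if v = \<sigma> i then 1 else 0))"
  unfolding hmon_def by (simp add: sum_fun_apply case_prod_unfold mvar_def mscale_def)

lemma hmon_pos:
  assumes perm: "\<sigma> permutes {1..N}" and p: "p \<in> {1..N}"
  shows "hmon N x y \<sigma> (\<sigma> p) = LL N \<sigma> p - RR N \<sigma> p + x p - y (\<sigma> p) - 1"
proof -
  have inj: "inj_on \<sigma> {1..N}" using perm permutes_inj_on by blast
  have eq: "(\<sigma> p = \<sigma> i) = (i = p)" if "i \<in> {1..N}" for i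
    using inj_onD[OF inj _ that p] by metis
  have A: "(\<Sum>i=1..N. (x i - y (\<sigma> i) - 1) * (if \<sigma> p = \<sigma> i then 1 else 0))
      = (\<Sum>i\<in>{1..N}. if i = p then x i - y (\<sigma> i) - 1 else 0)"
    by (rule sum.cong) (auto simp: eq)
  also have "\<dots> = x p - y (\<sigma> p) - 1" using p by simp
  finally have A: "(\<Sum>i=1..N. (x i - y (\<sigma> i) - 1) * (if \<sigma> p = \<sigma> i then 1 else 0)) = x p - y (\<sigma> p) - 1" .
  define S where "S = {1..N}"
  have "(\<Sum>(b,a)\<in>inversions N \<sigma>. (if \<sigma> p = b then 1 else 0) - (if \<sigma> p = a then 1 else (0::int)))
     = (\<Sum>i\<in>S. \<Sum>j\<in>S. if i < j \<and> \<sigma> j < \<sigma> i then (if \<sigma> p = \<sigma> i then 1 else 0) - (if \<sigma> p = \<sigma> j then 1 else 0) else 0)"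
    unfolding S_def using inv_sum[OF perm p, of "\<lambda>b a. (if \<sigma> p = b then 1 else 0) - (if \<sigma> p = a then 1 else (0::int))"]
    by simp
  also have "\<dots> = (\<Sum>i\<in>S. \<Sum>j\<in>S. (if i < j \<and> \<sigma> j < \<sigma> i \<and> i = p then 1 else 0) - (if i < j \<and> \<sigma> j < \<sigma> i \<and> j = p then 1 else 0))"
    by (intro sum.cong refl) (auto simp: eq S_def)
  also have "\<dots> = (\<Sum>i\<in>S. \<Sum>j\<in>S. (if i < j \<and> \<sigma> j < \<sigma> i \<and> i = p then 1 else 0))
      - (\<Sum>i\<in>S. \<Sum>j\<in>S. (if i < j \<and> \<sigma> j < \<sigma> i \<and> j = p then 1 else 0))"
    by (simp add: sum_subtractf)
  also have "(\<Sum>i\<in>S. \<Sum>j\<in>S. (if i < j \<and> \<sigma> j < \<sigma> i \<and> i = p then 1 else (0::int)))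
     = (\<Sum>i\<in>S. if i = p then (\<Sum>j\<in>S. if p < j \<and> \<sigma> j < \<sigma> p then 1 else 0) else 0)"
    by (intro sum.cong refl) auto
  also have "\<dots> = LL N \<sigma> p" using p by (simp add: S_def LL_def)
  also have "(\<Sum>i\<in>S. \<Sum>j\<in>S. (if i < j \<and> \<sigma> j < \<sigma> i \<and> j = p then 1 else (0::int)))
     = (\<Sum>j\<in>S. \<Sum>i\<in>S. (if i < j \<and> \<sigma> j < \<sigma> i \<and> j = p then 1 else (0::int)))"
    by (rule sum.swap)
  also have "\<dots> = (\<Sum>j\<in>S. if j = p then (\<Sum>i\<in>S. if i < p \<and> \<sigma> p < \<sigma> i then 1 else 0) else 0)"
    by (intro sum.cong refl) auto
  also have "\<dots> = RR N \<sigma> p" using p by (simp add: S_def RR_def)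
  finally show ?thesis unfolding hmon_apply A by simp
qed

lemma hmon_out:
  assumes perm: "\<sigma> permutes {1..N}" and v: "v \<notin> {1..N}"
  shows "hmon N x y \<sigma> v = 0"
proof -
  have r: "\<sigma> i \<in> {1..N}" if "i \<in> {1..N}" for i using permutes_in_image[OF perm] that by simp
  have sub: "inversions N \<sigma> \<subseteq> {1..N} \<times> {1..N}"
  proof
    fix q assume "q \<in> inversions N \<sigma>"
    then obtain i j where q: "q = (\<sigma> i, \<sigma> j)" "1 \<le> i" "i < j" "j \<le> N"
      unfolding inversions_def by blast
    then have "i \<in> {1..N}" "j \<in> {1..N}" by auto
    then show "q \<in> {1..N} \<times> {1..N}" using q(1) r by blast
  qed
  have "(\<Sum>(b,a)\<in>inversions N \<sigma>. (if v = b then 1 else 0) - (if v = a then 1 else (0::int))) = 0"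
  proof (rule sum.neutral, rule ballI)
    fix q assume "q \<in> inversions N \<sigma>"
    then have "fst q \<noteq> v" "snd q \<noteq> v" using sub v by (auto simp: mem_Times_iff)
    then show "(case q of (b,a) \<Rightarrow> (if v = b then 1 else 0) - (if v = a then 1 else (0::int))) = 0"
      by (auto simp: split_beta)
  qed
  moreover have "(\<Sum>i=1..N. (x i - y (\<sigma> i) - 1) * (if v = \<sigma> i then 1 else 0)) = 0"
  proof (rule sum.neutral, rule ballI)
    fix i assume "i \<in> {1..N}"
    then have "v \<noteq> \<sigma> i" using r v by metis
    then show "(x i - y (\<sigma> i) - 1) * (if v = \<sigma> i then 1 else 0) = 0" by simp
  qed
  ultimately show ?thesis unfolding hmon_apply by simp
qed

lemma mono_gap:
  assumes mono: "\<forall>i. 1 \<le> i \<and> i < N \<longrightarrow> x i < x (Suc i)"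
    and a: "1 \<le> a" "a \<le> b" "b \<le> N"
  shows "x a + (int b - int a) \<le> (x::nat\<Rightarrow>int) b"
proof -
  have "a \<le> b \<longrightarrow> b \<le> N \<longrightarrow> x a + (int b - int a) \<le> x b" for b
  proof (induction b)
    case 0 then show ?case using a(1) by simp
  next
    case (Suc n)
    show ?case
    proof (cases "a = Suc n")
      case True then show ?thesis by simp
    next
      case False
      show ?thesis
      proof (intro impI)
        assume h: "a \<le> Suc n" "Suc n \<le> N"
        with False have "a \<le> n" by simp
        with Suc h have "x a + (int n - int a) \<le> x n" by simp
        moreover have "x n < x (Suc n)" using mono h \<open>a \<le> n\<close> a(1) by auto
        ultimately show "x a + (int (Suc n) - int a) \<le> x (Suc n)" by simp
      qed
    qed
  qed
  then show ?thesis using a by blast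
qed

lemma count_int:
  assumes "1 \<le> a" "a \<le> b" "b \<le> N"
  shows "(\<Sum>l\<in>{1..N}. if a < l \<and> l \<le> b then 1 else (0::int)) = int b - int a"
proof -
  have "(\<Sum>l\<in>{1..N}. if a < l \<and> l \<le> b then 1 else (0::int)) = (\<Sum>l\<in>{1..N} \<inter> {a<..b}. 1)"
    by (subst sum.inter_restrict) auto
  also have "{1..N} \<inter> {a<..b} = {a<..b}" using assms by auto
  finally show ?thesis using assms by simp
qed

lemma key:
  assumes x_mono: "\<forall>i. 1 \<le> i \<and> i < N \<longrightarrow> x i < x (Suc i)"
    and y_mono: "\<forall>i. 1 \<le> i \<and> i < N \<longrightarrow> y i < y (Suc i)"
    and perm: "\<sigma> permutes {1..N}"
    and i: "i \<in> {1..N}" and j: "j \<in> {1..N}" and ij: "i < j" and sij: "\<sigma> j < \<sigma> i"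
  shows "hmon N x y \<sigma> (\<sigma> i) \<le> hmon N x y \<sigma> (\<sigma> j)"
proof -
  define S where "S = {1..N}"
  have inj: "inj_on \<sigma> {1..N}" using perm permutes_inj_on by blast
  have r: "\<sigma> l \<in> {1..N}" if "l \<in> {1..N}" for l using permutes_in_image[OF perm] that by simp
  have si: "\<sigma> i \<in> {1..N}" "\<sigma> j \<in> {1..N}" using r i j by auto
  have ne: "\<sigma> l \<noteq> \<sigma> m" if "l \<in> S" "m \<in> S" "l \<noteq> m" for l m
    using inj_onD[OF inj _ that(1,2)[unfolded S_def]] that(3) by metis
  define c where "c l = (if i < l \<and> \<sigma> l < \<sigma> i then 1 else 0) - (if l < i \<and> \<sigma> i < \<sigma> l then 1 else 0)
      - (if j < l \<and> \<sigma> l < \<sigma> j then 1 else 0) + (if l < j \<and> \<sigma> j < \<sigma> l then 1 else (0::int))" for l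
  have D: "LL N \<sigma> i - RR N \<sigma> i - LL N \<sigma> j + RR N \<sigma> j = (\<Sum>l\<in>S. c l)"
    unfolding LL_def RR_def c_def S_def by (simp add: sum.distrib sum_subtractf)
  have pt: "c l \<le> (if i < l \<and> l \<le> j then 1 else 0) + (if \<sigma> j < \<sigma> l \<and> \<sigma> l \<le> \<sigma> i then 1 else 0)"
    if l: "l \<in> S" for l
  proof -
    have "l \<noteq> i \<longrightarrow> \<sigma> l \<noteq> \<sigma> i" "l \<noteq> j \<longrightarrow> \<sigma> l \<noteq> \<sigma> j"
      using ne[OF l] i j unfolding S_def by auto
    then show ?thesis unfolding c_def using ij sij by (auto split: if_splits)
  qed
  have "(\<Sum>l\<in>S. c l) \<le> (\<Sum>l\<in>S. (if i < l \<and> l \<le> j then 1 else 0) + (if \<sigma> j < \<sigma> l \<and> \<sigma> l \<le> \<sigma> i then 1 else 0))"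
    by (rule sum_mono) (rule pt)
  also have "\<dots> = (\<Sum>l\<in>S. if i < l \<and> l \<le> j then 1 else 0) + (\<Sum>l\<in>S. if \<sigma> j < \<sigma> l \<and> \<sigma> l \<le> \<sigma> i then 1 else 0)"
    by (simp add: sum.distrib)
  also have "(\<Sum>l\<in>S. if \<sigma> j < \<sigma> l \<and> \<sigma> l \<le> \<sigma> i then 1 else (0::int))
      = (\<Sum>l\<in>S. if \<sigma> j < l \<and> l \<le> \<sigma> i then 1 else (0::int))"
    unfolding S_def using sum.permute[OF perm, of "\<lambda>l. if \<sigma> j < l \<and> l \<le> \<sigma> i then 1 else (0::int)"]
    by (simp add: comp_def)
  also have "\<dots> = int (\<sigma> i) - int (\<sigma> j)"
    unfolding S_def by (rule count_int) (use si sij in auto)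
  also have "(\<Sum>l\<in>S. if i < l \<and> l \<le> j then 1 else (0::int)) = int j - int i"
    unfolding S_def by (rule count_int) (use i j ij in auto)
  finally have Dle: "LL N \<sigma> i - RR N \<sigma> i - LL N \<sigma> j + RR N \<sigma> j \<le> (int j - int i) + (int (\<sigma> i) - int (\<sigma> j))"
    using D by simp
  have xg: "x i + (int j - int i) \<le> x j" by (rule mono_gap[OF x_mono]) (use i j ij in auto)
  have yg: "y (\<sigma> j) + (int (\<sigma> i) - int (\<sigma> j)) \<le> y (\<sigma> i)"
    by (rule mono_gap[OF y_mono]) (use si sij in auto)
  show ?thesis unfolding hmon_pos[OF perm i] hmon_pos[OF perm j] using Dle xg yg by linarith
qed

lemma swap_perm:
  assumes perm: "\<sigma> permutes {1..N}" and k: "1 \<le> k" "k < N"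
  shows "\<sigma>(k := \<sigma> (Suc k), Suc k := \<sigma> k) = \<sigma> \<circ> transpose k (Suc k)"
    "\<sigma>(k := \<sigma> (Suc k), Suc k := \<sigma> k) permutes {1..N}"
proof -
  show e: "\<sigma>(k := \<sigma> (Suc k), Suc k := \<sigma> k) = \<sigma> \<circ> transpose k (Suc k)"
    by (auto simp: fun_eq_iff transpose_def)
  have "transpose k (Suc k) permutes {1..N}" by (rule permutes_swap_id) (use k in auto)
  then show "\<sigma>(k := \<sigma> (Suc k), Suc k := \<sigma> k) permutes {1..N}"
    unfolding e by (rule permutes_compose[OF _ perm])
qed

lemma LR_other:
  assumes perm: "\<sigma> permutes {1..N}" and k: "1 \<le> k" "k < N"
    and l: "l \<noteq> k" "l \<noteq> Suc k"
  shows "LL N (\<sigma>(k := \<sigma> (Suc k), Suc k := \<sigma> k)) l = LL N \<sigma> l"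
    "RR N (\<sigma>(k := \<sigma> (Suc k), Suc k := \<sigma> k)) l = RR N \<sigma> l"
proof -
  define \<tau> where "\<tau> = transpose k (Suc k)"
  have tp: "\<tau> permutes {1..N}" unfolding \<tau>_def by (rule permutes_swap_id) (use k in auto)
  have e: "\<sigma>(k := \<sigma> (Suc k), Suc k := \<sigma> k) = \<sigma> \<circ> \<tau>"
    unfolding \<tau>_def by (rule swap_perm(1)[OF perm k])
  have tl: "\<tau> l = l" unfolding \<tau>_def using l by simp
  have lt1: "(l < m) = (l < \<tau> m)" for m using l unfolding \<tau>_def by (auto simp: transpose_def)
  have lt2: "(m < l) = (\<tau> m < l)" for m using l unfolding \<tau>_def by (auto simp: transpose_def)
  have "LL N \<sigma> l = (\<Sum>m\<in>{1..N}. ((\<lambda>m. if l < m \<and> \<sigma> m < \<sigma> l then 1 else 0) \<circ> \<tau>) m)"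
    unfolding LL_def by (rule sum.permute[OF tp])
  also have "\<dots> = LL N (\<sigma> \<circ> \<tau>) l"
    unfolding LL_def by (intro sum.cong refl) (simp add: tl lt1[symmetric])
  finally show "LL N (\<sigma>(k := \<sigma> (Suc k), Suc k := \<sigma> k)) l = LL N \<sigma> l" unfolding e by simp
  have "RR N \<sigma> l = (\<Sum>m\<in>{1..N}. ((\<lambda>m. if m < l \<and> \<sigma> l < \<sigma> m then 1 else 0) \<circ> \<tau>) m)"
    unfolding RR_def by (rule sum.permute[OF tp])
  also have "\<dots> = RR N (\<sigma> \<circ> \<tau>) l"
    unfolding RR_def by (intro sum.cong refl) (simp add: tl lt2[symmetric])
  finally show "RR N (\<sigma>(k := \<sigma> (Suc k), Suc k := \<sigma> k)) l = RR N \<sigma> l" unfolding e by simp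
qed

lemma LR_pair:
  fixes \<sigma> :: "nat \<Rightarrow> nat"
  assumes k: "1 \<le> k" "k < N"
  defines "\<sigma>' \<equiv> \<sigma>(k := \<sigma> (Suc k), Suc k := \<sigma> k)"
  shows "LL N \<sigma>' k + LL N \<sigma>' (Suc k) - RR N \<sigma>' k - RR N \<sigma>' (Suc k)
       = LL N \<sigma> k + LL N \<sigma> (Suc k) - RR N \<sigma> k - RR N \<sigma> (Suc k)"
proof -
  define G where "G f m = (if k < m \<and> f m < f k then 1 else 0) + (if Suc k < m \<and> f m < f (Suc k) then 1 else 0)
     - (if m < k \<and> f k < f m then 1 else 0) - (if m < Suc k \<and> f (Suc k) < f m then 1 else (0::int))"
    for f :: "nat \<Rightarrow> nat" and m
  have eq: "LL N f k + LL N f (Suc k) - RR N f k - RR N f (Suc k) = (\<Sum>m\<in>{1..N}. G f m)" for f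
    unfolding LL_def RR_def G_def by (simp add: sum.distrib sum_subtractf)
  define D where "D m = G \<sigma>' m - G \<sigma> m" for m
  have fin: "finite ({1..N} - {k})" by simp
  have kin: "k \<in> {1..N}" "Suc k \<in> {1..N} - {k}" using k by auto
  have "(\<Sum>m\<in>{1..N}. D m) = D k + (\<Sum>m\<in>{1..N} - {k}. D m)"
    using kin by (simp add: sum.remove)
  also have "(\<Sum>m\<in>{1..N} - {k}. D m) = D (Suc k) + (\<Sum>m\<in>{1..N} - {k} - {Suc k}. D m)"
    using kin fin by (simp add: sum.remove)
  also have "(\<Sum>m\<in>{1..N} - {k} - {Suc k}. D m) = 0"
    by (rule sum.neutral) (auto simp: D_def G_def \<sigma>'_def)
  also have "D k + (D (Suc k) + 0) = 0"
    by (auto simp: D_def G_def \<sigma>'_def)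
  finally have "(\<Sum>m\<in>{1..N}. G \<sigma>' m) - (\<Sum>m\<in>{1..N}. G \<sigma> m) = 0"
    unfolding D_def by (simp add: sum_subtractf)
  then show ?thesis unfolding eq by simp
qed

lemma hsubst_None: "hsubst N \<gamma> m None = m \<gamma>"
  unfolding hsubst_def by (simp add: mscale_def mvar_def sum_fun_apply)

lemma hsubst_Some: "hsubst N \<gamma> m (Some d) = (if d = \<gamma> then 0 else m d - m \<gamma> * (if d \<in> {1..N} then 1 else 0))"
proof -
  have "(\<Sum>e\<in>{1..N} - {\<gamma>}. mvar (Some e) (Some d)) = (if d \<in> {1..N} - {\<gamma>} then 1 else (0::int))"
    by (simp add: mvar_def)
  then show ?thesis unfolding hsubst_def by (auto simp: mscale_def sum_fun_apply mvar_def)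
qed

lemma identify_apply: "identify a b e v = (if v = b then 0 else e v) + e b * (if v = a then 1 else 0)"
  unfolding identify_def by (simp add: mscale_def mvar_def)

lemma final_i:
  assumes oth: "\<And>v. v \<noteq> \<alpha> \<Longrightarrow> v \<noteq> \<beta> \<Longrightarrow> m' v = m v"
    and sm: "m' \<alpha> + m' \<beta> = m \<alpha> + m \<beta>"
    and ne: "\<alpha> \<noteq> \<beta>" "\<gamma> \<noteq> \<alpha>" "\<gamma> \<noteq> \<beta>" and mem: "\<alpha> \<in> {1..N}" "\<beta> \<in> {1..N}"
  shows "identify (Some \<alpha>) (Some \<beta>) (hsubst N \<gamma> m) = identify (Some \<alpha>) (Some \<beta>) (hsubst N \<gamma> m')"
proof (rule ext)
  fix v
  have g: "m' \<gamma> = m \<gamma>" using oth ne by metis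
  show "identify (Some \<alpha>) (Some \<beta>) (hsubst N \<gamma> m) v = identify (Some \<alpha>) (Some \<beta>) (hsubst N \<gamma> m') v"
  proof (cases v)
    case None then show ?thesis by (simp add: identify_apply hsubst_None g)
  next
    case (Some d)
    show ?thesis
    proof (cases "d = \<beta>")
      case True then show ?thesis using Some ne by (simp add: identify_apply)
    next
      case False
      show ?thesis
      proof (cases "d = \<alpha>")
        case True then show ?thesis using Some ne mem sm g
          by (simp add: identify_apply hsubst_Some algebra_simps)
      next
        case False2: False
        then show ?thesis using Some False ne g oth[of d]
          by (simp add: identify_apply hsubst_Some)
      qed
    qed
  qed
qed

theorem lemma3p5:
  fixes N :: nat and x y :: "nat \<Rightarrow> int" and \<sigma> \<sigma>' :: "nat \<Rightarrow> nat"
    and k \<alpha> \<beta> \<gamma> :: nat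
  assumes x_mono: "\<forall>i. 1 \<le> i \<and> i < N \<longrightarrow> x i < x (Suc i)"
    and y_mono: "\<forall>i. 1 \<le> i \<and> i < N \<longrightarrow> y i < y (Suc i)"
    and perm: "\<sigma> permutes {1..N}"
    and k: "1 \<le> k" "k < N"
    and ab: "{\<sigma> k, \<sigma> (Suc k)} = {\<alpha>, \<beta>}"
    and swap: "\<sigma>' = \<sigma>(k := \<sigma> (Suc k), Suc k := \<sigma> k)"
    and \<gamma>: "\<gamma> \<in> {1..N}" "\<gamma> \<noteq> \<alpha>" "\<gamma> \<noteq> \<beta>"
  shows "identify (Some \<alpha>) (Some \<beta>) (hsubst N \<gamma> (hmon N x y \<sigma>))
           = identify (Some \<alpha>) (Some \<beta>) (hsubst N \<gamma> (hmon N x y \<sigma>'))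
       \<and> ((\<exists>j. Suc k < j \<and> j \<le> N \<and> \<sigma> j = \<gamma>) \<and> \<gamma> < \<alpha> \<and> \<gamma> < \<beta> \<longrightarrow>
           hsubst N \<gamma> (hmon N x y \<sigma>) (Some \<alpha>) \<le> 0 \<and>
           hsubst N \<gamma> (hmon N x y \<sigma>) (Some \<beta>) \<le> 0 \<and>
           hsubst N \<gamma> (hmon N x y \<sigma>') (Some \<alpha>) \<le> 0 \<and>
           hsubst N \<gamma> (hmon N x y \<sigma>') (Some \<beta>) \<le> 0)"
proof -
  define S where "S = {1..N}"
  have perm': "\<sigma>' permutes {1..N}" using swap_perm(2)[OF perm k] swap by simp
  have kS: "k \<in> {1..N}" "Suc k \<in> {1..N}" using k by auto
  have inj: "inj_on \<sigma> {1..N}" using perm permutes_inj_on by blast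
  have r: "\<sigma> l \<in> {1..N}" if "l \<in> {1..N}" for l using permutes_in_image[OF perm] that by simp
  have pq: "\<sigma> k \<noteq> \<sigma> (Suc k)" using inj_onD[OF inj _ kS] by auto
  have cs: "(\<sigma> k = \<alpha> \<and> \<sigma> (Suc k) = \<beta>) \<or> (\<sigma> k = \<beta> \<and> \<sigma> (Suc k) = \<alpha>)"
    using ab by (simp add: doubleton_eq_iff)
  have abne: "\<alpha> \<noteq> \<beta>" using cs pq by auto
  have memS: "\<alpha> \<in> {1..N}" "\<beta> \<in> {1..N}" using cs r kS by auto
  have s1: "\<sigma>' k = \<sigma> (Suc k)" "\<sigma>' (Suc k) = \<sigma> k" using swap by auto
  have s2: "\<sigma>' l = \<sigma> l" if "l \<noteq> k" "l \<noteq> Suc k" for l using swap that by auto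
  have oth: "hmon N x y \<sigma>' v = hmon N x y \<sigma> v" if v: "v \<noteq> \<alpha>" "v \<noteq> \<beta>" for v
  proof (cases "v \<in> {1..N}")
    case False then show ?thesis using hmon_out[OF perm] hmon_out[OF perm'] by simp
  next
    case True
    have "v \<in> \<sigma> ` {1..N}" using permutes_image[OF perm] True by simp
    then obtain l where l: "l \<in> {1..N}" "v = \<sigma> l" by blast
    have lk: "l \<noteq> k" "l \<noteq> Suc k" using l(2) v cs by auto
    have "hmon N x y \<sigma>' v = hmon N x y \<sigma>' (\<sigma>' l)" using s2[OF lk] l(2) by simp
    also have "\<dots> = LL N \<sigma>' l - RR N \<sigma>' l + x l - y (\<sigma>' l) - 1" by (rule hmon_pos[OF perm' l(1)])
    also have "\<dots> = LL N \<sigma> l - RR N \<sigma> l + x l - y (\<sigma> l) - 1"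
      using LR_other[OF perm k lk] s2[OF lk] swap by simp
    also have "\<dots> = hmon N x y \<sigma> v" using hmon_pos[OF perm l(1)] l(2) by simp
    finally show ?thesis .
  qed
  have pair: "hmon N x y \<sigma>' (\<sigma> k) + hmon N x y \<sigma>' (\<sigma> (Suc k)) = hmon N x y \<sigma> (\<sigma> k) + hmon N x y \<sigma> (\<sigma> (Suc k))"
  proof -
    have a1: "hmon N x y \<sigma>' (\<sigma> k) = LL N \<sigma>' (Suc k) - RR N \<sigma>' (Suc k) + x (Suc k) - y (\<sigma> k) - 1"
      using hmon_pos[OF perm' kS(2)] s1 by simp
    have a2: "hmon N x y \<sigma>' (\<sigma> (Suc k)) = LL N \<sigma>' k - RR N \<sigma>' k + x k - y (\<sigma> (Suc k)) - 1"
      using hmon_pos[OF perm' kS(1)] s1 by simp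
    have a3: "hmon N x y \<sigma> (\<sigma> k) = LL N \<sigma> k - RR N \<sigma> k + x k - y (\<sigma> k) - 1"
      using hmon_pos[OF perm kS(1)] by simp
    have a4: "hmon N x y \<sigma> (\<sigma> (Suc k)) = LL N \<sigma> (Suc k) - RR N \<sigma> (Suc k) + x (Suc k) - y (\<sigma> (Suc k)) - 1"
      using hmon_pos[OF perm kS(2)] by simp
    have "LL N \<sigma>' k + LL N \<sigma>' (Suc k) - RR N \<sigma>' k - RR N \<sigma>' (Suc k)
       = LL N \<sigma> k + LL N \<sigma> (Suc k) - RR N \<sigma> k - RR N \<sigma> (Suc k)"
      using LR_pair[OF k, of \<sigma>] swap by simp
    then show ?thesis unfolding a1 a2 a3 a4 by linarith
  qed
  have sm: "hmon N x y \<sigma>' \<alpha> + hmon N x y \<sigma>' \<beta> = hmon N x y \<sigma> \<alpha> + hmon N x y \<sigma> \<beta>"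
    using cs pair by auto
  have part1: "identify (Some \<alpha>) (Some \<beta>) (hsubst N \<gamma> (hmon N x y \<sigma>))
           = identify (Some \<alpha>) (Some \<beta>) (hsubst N \<gamma> (hmon N x y \<sigma>'))"
    by (rule final_i[OF oth sm abne \<gamma>(2,3) memS]) auto
  have part2: "hsubst N \<gamma> (hmon N x y \<sigma>) (Some \<alpha>) \<le> 0 \<and>
           hsubst N \<gamma> (hmon N x y \<sigma>) (Some \<beta>) \<le> 0 \<and>
           hsubst N \<gamma> (hmon N x y \<sigma>') (Some \<alpha>) \<le> 0 \<and>
           hsubst N \<gamma> (hmon N x y \<sigma>') (Some \<beta>) \<le> 0"
    if hyp: "(\<exists>j. Suc k < j \<and> j \<le> N \<and> \<sigma> j = \<gamma>) \<and> \<gamma> < \<alpha> \<and> \<gamma> < \<beta>"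
  proof -
    obtain j where j: "Suc k < j" "j \<le> N" "\<sigma> j = \<gamma>" using hyp by blast
    have jS: "j \<in> {1..N}" using j by auto
    have H: "hsubst N \<gamma> (hmon N x y \<tau>) (Some d) \<le> 0"
      if tp: "\<tau> permutes {1..N}" and tj: "\<tau> j = \<gamma>" and i: "i \<in> {k, Suc k}" and ti: "\<tau> i = d"
        and d: "d \<in> {1..N}" "d \<noteq> \<gamma>" "\<gamma> < d" for \<tau> i d
    proof -
      have iS: "i \<in> {1..N}" using i kS by auto
      have "hmon N x y \<tau> (\<tau> i) \<le> hmon N x y \<tau> (\<tau> j)"
        by (rule key[OF x_mono y_mono tp iS jS]) (use i j tj ti d in auto)
      then show ?thesis using d ti tj by (simp add: hsubst_Some)
    qed
    have tj': "\<sigma>' j = \<gamma>" using s2 j by simp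
    have c1: "\<exists>i\<in>{k, Suc k}. \<sigma> i = d" if "d \<in> {\<alpha>, \<beta>}" for d using cs that by auto
    have c2: "\<exists>i\<in>{k, Suc k}. \<sigma>' i = d" if "d \<in> {\<alpha>, \<beta>}" for d using cs that s1 by auto
    show ?thesis
      using H[OF perm j(3)] H[OF perm' tj'] c1 c2 memS \<gamma> hyp by (metis insertCI)
  qed
  show ?thesis using part1 part2 by blast
qed

end
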